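(* There are constants $c,C>0$ such that for all $n\ge2$ and all $j\le n$, $c\,n\le\mu(D_n,z_j,e_j)\le C\,n$, i.e. $\mu(D_n,z_j,e_j)=\Theta(n)$.
   Context: For $n\ge2$ let $k=\lceil\sqrt n\rceil-1$ and $S_k=\{(-1+\frac{2p}{k})+i(-1+\frac{2q}{k}):0\le p,q\le k\}\subset\mathbb{C}$. $D_n$ is the diagonal matrix whose diagonal entries $z_1,\dots,z_n$ are the first $n$ elements of $S_k$ in lexicographic order; $e_j$ are the standard basis vectors. For $v\ne0$, $T_v=v^\perp\subset\mathbb{C}^n$, $P_{v^\perp}$ the orthogonal projection onto $T_v$, $A_{\lambda,v}=P_{v^\perp}(A-\lambda\mathrm{Id})|_{T_v}$, and $\mu(A,\lambda,v)=\|A\|_F\|A_{\lambda,v}^{-1}\|$ (Frobenius norm times operator norm; $\infty$ if not invertible). *)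

theory Defs
  imports Complex_Main "HOL-Library.Extended_Real"
begin

(* Vectors in C^n: functions nat => complex, coordinates 0..n-1 (zero outside).
   Matrices: nat => nat => complex, entries (i,j) with i,j < n. *)

definition cvecs :: "nat \<Rightarrow> (nat \<Rightarrow> complex) set" where
  "cvecs n = {x. \<forall>i\<ge>n. x i = 0}"

definition cinner :: "nat \<Rightarrow> (nat \<Rightarrow> complex) \<Rightarrow> (nat \<Rightarrow> complex) \<Rightarrow> complex" where
  "cinner n x y = (\<Sum>i<n. x i * cnj (y i))"

definition vnorm :: "nat \<Rightarrow> (nat \<Rightarrow> complex) \<Rightarrow> real" where
  "vnorm n x = sqrt (\<Sum>i<n. (cmod (x i))\<^sup>2)"

definition frob :: "nat \<Rightarrow> (nat \<Rightarrow> nat \<Rightarrow> complex) \<Rightarrow> real" where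
  "frob n A = sqrt (\<Sum>i<n. \<Sum>j<n. (cmod (A i j))\<^sup>2)"

definition matvec :: "nat \<Rightarrow> (nat \<Rightarrow> nat \<Rightarrow> complex) \<Rightarrow> (nat \<Rightarrow> complex) \<Rightarrow> (nat \<Rightarrow> complex)" where
  "matvec n A x = (\<lambda>i. if i < n then (\<Sum>j<n. A i j * x j) else 0)"

definition shiftmat :: "nat \<Rightarrow> (nat \<Rightarrow> nat \<Rightarrow> complex) \<Rightarrow> complex \<Rightarrow> (nat \<Rightarrow> nat \<Rightarrow> complex)" where
  "shiftmat n A lam = (\<lambda>i j. A i j - (if i = j \<and> i < n then lam else 0))"

definition Tperp :: "nat \<Rightarrow> (nat \<Rightarrow> complex) \<Rightarrow> (nat \<Rightarrow> complex) set" where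
  "Tperp n v = {x \<in> cvecs n. cinner n x v = 0}"

definition projperp :: "nat \<Rightarrow> (nat \<Rightarrow> complex) \<Rightarrow> (nat \<Rightarrow> complex) \<Rightarrow> (nat \<Rightarrow> complex)" where
  "projperp n v x = (\<lambda>i. if i < n then x i - (cinner n x v / cinner n v v) * v i else 0)"

definition Aop :: "nat \<Rightarrow> (nat \<Rightarrow> nat \<Rightarrow> complex) \<Rightarrow> complex \<Rightarrow> (nat \<Rightarrow> complex) \<Rightarrow> (nat \<Rightarrow> complex) \<Rightarrow> (nat \<Rightarrow> complex)" where
  "Aop n A lam v = (\<lambda>x. projperp n v (matvec n (shiftmat n A lam) x))"

definition mu :: "nat \<Rightarrow> (nat \<Rightarrow> nat \<Rightarrow> complex) \<Rightarrow> complex \<Rightarrow> (nat \<Rightarrow> complex) \<Rightarrow> ereal" where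
  "mu n A lam v =
    (if bij_betw (Aop n A lam v) (Tperp n v) (Tperp n v)
     then ereal (frob n A * Sup {vnorm n (inv_into (Tperp n v) (Aop n A lam v) y) | y.
                                   y \<in> Tperp n v \<and> vnorm n y = 1})
     else \<infinity>)"

definition kk :: "nat \<Rightarrow> nat" where
  "kk n = nat \<lceil>sqrt (real n)\<rceil> - 1"

definition Sgrid :: "nat \<Rightarrow> complex set" where
  "Sgrid k = {Complex (-1 + 2 * real p / real k) (-1 + 2 * real q / real k) | p q. p \<le> k \<and> q \<le> k}"

definition lexless :: "complex \<Rightarrow> complex \<Rightarrow> bool" where
  "lexless z w \<longleftrightarrow> Re z < Re w \<or> (Re z = Re w \<and> Im z < Im w)"

definition Slist :: "nat \<Rightarrow> complex list" where
  "Slist k = (THE xs. sorted_wrt lexless xs \<and> set xs = Sgrid k)"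

text \<open>z n i (0-based, i < n) is the (i+1)-th element of S_k, k = kk n\<close>
definition zz :: "nat \<Rightarrow> nat \<Rightarrow> complex" where
  "zz n i = Slist (kk n) ! i"

definition Dmat :: "nat \<Rightarrow> (nat \<Rightarrow> nat \<Rightarrow> complex)" where
  "Dmat n = (\<lambda>i j. if i = j \<and> i < n then zz n i else 0)"

definition ebasis :: "nat \<Rightarrow> (nat \<Rightarrow> complex)" where
  "ebasis j = (\<lambda>i. if i = j then 1 else 0)"

end

theory Submission
  imports Defs "HOL-Library.Product_Lexorder"
begin

definition gp :: "nat \<Rightarrow> nat \<Rightarrow> nat \<Rightarrow> complex" where
  "gp k p q = Complex (-1 + 2 * real p / real k) (-1 + 2 * real q / real k)"

definition LL :: "nat \<Rightarrow> complex list" where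
  "LL k = map (\<lambda>i. gp k (i div (k+1)) (i mod (k+1))) [0..<(k+1)*(k+1)]"

lemma lexless_key: "lexless z w \<longleftrightarrow> (Re z, Im z) < (Re w, Im w)"
  by (auto simp: lexless_def)

lemma slist_unique:
  assumes "sorted_wrt lexless xs" "sorted_wrt lexless ys" "set xs = set ys"
  shows "xs = ys"
proof -
  let ?f = "\<lambda>z::complex. (Re z, Im z)"
  have inj: "inj ?f" by (auto simp: inj_def complex_eq_iff)
  have a: "sorted_wrt (<) (map ?f xs)" using assms(1)
    by (simp add: sorted_wrt_map lexless_key[abs_def])
  have b: "sorted_wrt (<) (map ?f ys)" using assms(2)
    by (simp add: sorted_wrt_map lexless_key[abs_def])
  have "map ?f ys = map ?f xs"
    by (rule strict_sorted_equal[OF a b]) (simp add: assms(3))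
  then show ?thesis using inj by (simp add: inj_map_eq_map)
qed

lemma LL_sorted:
  assumes "k \<ge> 1"
  shows "sorted_wrt lexless (LL k)"
  unfolding LL_def sorted_wrt_map
proof (rule sorted_wrt_mono_rel[OF _ sorted_wrt_upt])
  fix i i' assume ii0: "i \<in> set [0..<(k+1)*(k+1)]" "i' \<in> set [0..<(k+1)*(k+1)]" "i < i'"
  have ii: "i < i'" "i' < (k+1)*(k+1)" using ii0 by auto
  let ?p = "i div (k+1)" and ?p' = "i' div (k+1)"
  have "?p \<le> ?p'" using ii by (simp add: div_le_mono)
  show "lexless (gp k ?p (i mod (k+1))) (gp k ?p' (i' mod (k+1)))"
  proof (cases "?p = ?p'")
    case True
    then have "i mod (k+1) < i' mod (k+1)" using ii
      by (metis add_less_cancel_left div_mult_mod_eq)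
    then show ?thesis using True assms
      by (simp add: lexless_def gp_def divide_strict_right_mono)
  next
    case False
    then have "?p < ?p'" using \<open>?p \<le> ?p'\<close> by simp
    then show ?thesis using assms
      by (simp add: lexless_def gp_def divide_strict_right_mono)
  qed
qed

lemma LL_set: "set (LL k) = Sgrid k"
proof
  show "set (LL k) \<subseteq> Sgrid k"
  proof
    fix z assume "z \<in> set (LL k)"
    then obtain i where i: "i < (k+1)*(k+1)" "z = gp k (i div (k+1)) (i mod (k+1))"
      unfolding LL_def set_map set_upt by auto
    have "i div (k+1) < k+1" using i(1) by (simp add: less_mult_imp_div_less)
    moreover have "i mod (k+1) < k+1" by simp
    ultimately have "i div (k+1) \<le> k" "i mod (k+1) \<le> k" by auto
    then show "z \<in> Sgrid k" using i(2) unfolding Sgrid_def gp_def by blast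
  qed
next
  show "Sgrid k \<subseteq> set (LL k)"
  proof
    fix z assume "z \<in> Sgrid k"
    then obtain p q where pq: "p \<le> k" "q \<le> k" "z = gp k p q"
      by (auto simp: Sgrid_def gp_def)
    let ?i = "p*(k+1) + q"
    have "?i < (k+1)*(k+1)"
    proof -
      have "?i < p*(k+1) + (k+1)" using pq by simp
      also have "\<dots> = (p+1)*(k+1)" by simp
      also have "\<dots> \<le> (k+1)*(k+1)" using pq by (intro mult_right_mono) auto
      finally show ?thesis .
    qed
    moreover have "?i = q + (k+1)*p" by simp
    then have "?i div (k+1) = p" "?i mod (k+1) = q" using pq
      by (simp_all only: div_mult_self2 mod_mult_self2) auto
    ultimately show "z \<in> set (LL k)" using pq unfolding LL_def
      by (metis (no_types, lifting) atLeastLessThan_iff image_eqI set_map set_upt zero_le)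
  qed
qed

lemma Slist_eq: "k \<ge> 1 \<Longrightarrow> Slist k = LL k"
  unfolding Slist_def
  by (rule the_equality) (use LL_sorted LL_set slist_unique in auto)

lemma zz_eq:
  assumes "kk n \<ge> 1" "i < (kk n + 1) * (kk n + 1)"
  shows "zz n i = gp (kk n) (i div (kk n + 1)) (i mod (kk n + 1))"
  unfolding zz_def Slist_eq[OF assms(1)] LL_def using assms(2) by (simp del: upt_Suc)

lemma Aop_diag:
  assumes "jj < n"
  shows "Aop n (\<lambda>i j. if i = j \<and> i < n then z i else 0) (z jj) (ebasis jj) x
       = (\<lambda>i. if i < n then (z i - z jj) * x i else 0)"
proof -
  have mv: "matvec n (shiftmat n (\<lambda>i j. if i = j \<and> i < n then z i else 0) (z jj)) x
      = (\<lambda>i. if i < n then (z i - z jj) * x i else 0)"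
  proof
    fix i show "matvec n (shiftmat n (\<lambda>i j. if i = j \<and> i < n then z i else 0) (z jj)) x i
      = (if i < n then (z i - z jj) * x i else 0)"
    proof (cases "i < n")
      case True
      have "(\<Sum>j<n. shiftmat n (\<lambda>i j. if i = j \<and> i < n then z i else 0) (z jj) i j * x j)
          = (\<Sum>j<n. if j = i then (z i - z jj) * x i else 0)"
        by (rule sum.cong) (auto simp: shiftmat_def)
      also have "\<dots> = (z i - z jj) * x i" using True by simp
      finally show ?thesis using True by (simp add: matvec_def)
    qed (simp add: matvec_def)
  qed
  have ce: "cinner n y (ebasis jj) = y jj" for y
    using assms by (simp add: cinner_def ebasis_def if_distrib cong: if_cong)
  show ?thesis unfolding Aop_def mv projperp_def ce
    by (rule ext) (simp add: ebasis_def)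
qed

lemma Tperp_e:
  assumes "jj < n"
  shows "Tperp n (ebasis jj) = {x. (\<forall>i\<ge>n. x i = 0) \<and> x jj = 0}"
proof -
  have ce: "cinner n y (ebasis jj) = y jj" for y
    using assms by (simp add: cinner_def ebasis_def if_distrib cong: if_cong)
  show ?thesis by (auto simp: Tperp_def cvecs_def ce)
qed


lemma mu_diag:
  fixes z :: "nat \<Rightarrow> complex"
  assumes jj: "jj < n" and d: "d > 0" and e: "e > 0"
    and sep: "\<And>i. i < n \<Longrightarrow> i \<noteq> jj \<Longrightarrow> d \<le> cmod (z i - z jj)"
    and i0: "i0 < n" "i0 \<noteq> jj" "cmod (z i0 - z jj) \<le> e"
  shows "\<exists>S. mu n (\<lambda>i j. if i = j \<and> i < n then z i else 0) (z jj) (ebasis jj)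
           = ereal (frob n (\<lambda>i j. if i = j \<and> i < n then z i else 0) * S)
         \<and> 1/e \<le> S \<and> S \<le> 1/d"
proof -
  define M where "M = (\<lambda>i j. if i = j \<and> i < n then z i else 0)"
  define A where "A = Aop n M (z jj) (ebasis jj)"
  define T where "T = Tperp n (ebasis jj)"
  define g where "g = (\<lambda>y i. if i < n \<and> i \<noteq> jj then y i / (z i - z jj) else 0)"
  have Aeq: "A x = (\<lambda>i. if i < n then (z i - z jj) * x i else 0)" for x
    unfolding A_def M_def using Aop_diag[OF jj] by simp
  have Teq: "T = {x. (\<forall>i\<ge>n. x i = 0) \<and> x jj = 0}"
    unfolding T_def using Tperp_e[OF jj] by simp
  have nz: "z i - z jj \<noteq> 0" if "i < n" "i \<noteq> jj" for i
    using sep[OF that] d by auto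
  have AT: "A x \<in> T" for x using jj by (simp add: Aeq Teq)
  have gT: "g y \<in> T" for y by (simp add: g_def Teq)
  have gA: "g (A x) = x" if "x \<in> T" for x
  proof
    fix i show "g (A x) i = x i" using that nz[of i] by (auto simp: g_def Aeq Teq)
  qed
  have Ag: "A (g y) = y" if "y \<in> T" for y
  proof
    fix i show "A (g y) i = y i" using that nz[of i] by (auto simp: g_def Aeq Teq)
  qed
  have bij: "bij_betw A T T"
    by (rule bij_betw_byWitness[of T g A T]) (use AT gT gA Ag in auto)
  have inj: "inj_on A T" using bij bij_betw_imp_inj_on by blast
  have invg: "inv_into T A y = g y" if "y \<in> T" for y
    using inj gT[of y] Ag[OF that] by (simp add: inv_into_f_eq)
  define F where "F = {vnorm n (inv_into T A y) | y. y \<in> T \<and> vnorm n y = 1}"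
  have ub: "v \<le> 1/d" if "v \<in> F" for v
  proof -
    obtain y where y: "y \<in> T" "vnorm n y = 1" "v = vnorm n (g y)"
      using \<open>v \<in> F\<close> invg unfolding F_def by auto
    have tmb: "(cmod (g y i))\<^sup>2 \<le> (cmod (y i))\<^sup>2 / d\<^sup>2" if "i < n" for i
    proof (cases "i = jj")
      case False
      have "cmod (g y i) = cmod (y i) / cmod (z i - z jj)"
        using that False by (simp add: g_def norm_divide)
      also have "\<dots> \<le> cmod (y i) / d"
        using sep[OF that False] d by (intro divide_left_mono) (auto, smt (verit) mult_pos_pos)
      finally have "(cmod (g y i))\<^sup>2 \<le> (cmod (y i) / d)\<^sup>2"
        by (intro power_mono) auto
      then show ?thesis by (simp add: power_divide)
    qed (simp add: g_def)
    have "(\<Sum>i<n. (cmod (g y i))\<^sup>2) \<le> (\<Sum>i<n. (cmod (y i))\<^sup>2 / d\<^sup>2)"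
      by (rule sum_mono) (use tmb in auto)
    also have "\<dots> = (\<Sum>i<n. (cmod (y i))\<^sup>2) / d\<^sup>2" by (simp add: sum_divide_distrib)
    finally have "vnorm n (g y) \<le> sqrt ((\<Sum>i<n. (cmod (y i))\<^sup>2) / d\<^sup>2)"
      unfolding vnorm_def by (rule real_sqrt_le_mono)
    also have "\<dots> = vnorm n y / d" using d by (simp add: vnorm_def real_sqrt_divide)
    finally show ?thesis using y by simp
  qed
  define y0 where "y0 = ebasis i0"
  have y0T: "y0 \<in> T" using i0 by (simp add: Teq y0_def ebasis_def)
  have sum1: "(\<Sum>i<n. (cmod (if i = i0 then c else 0))\<^sup>2) = (cmod c)\<^sup>2" for c
  proof -
    have "(\<lambda>i. (cmod (if i = i0 then c else 0))\<^sup>2) = (\<lambda>i. if i = i0 then (cmod c)\<^sup>2 else 0)"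
      by auto
    note eqq = this
    show ?thesis unfolding eqq using i0 by simp
  qed
  have vy0: "vnorm n y0 = 1"
    unfolding vnorm_def y0_def ebasis_def sum1 by simp
  have gy0: "g y0 i = (if i = i0 then 1 / (z i0 - z jj) else 0)" if "i < n" for i
    using i0 that by (simp add: g_def y0_def ebasis_def)
  have "(\<Sum>i<n. (cmod (g y0 i))\<^sup>2) = (\<Sum>i<n. (cmod (if i = i0 then 1 / (z i0 - z jj) else 0))\<^sup>2)"
    by (rule sum.cong) (simp_all only: gy0 lessThan_iff)
  then have "vnorm n (g y0) = sqrt ((cmod (1 / (z i0 - z jj)))\<^sup>2)"
    unfolding vnorm_def sum1 by simp
  also have "\<dots> = 1 / cmod (z i0 - z jj)" by (simp add: norm_divide)
  finally have vg0: "vnorm n (g y0) = 1 / cmod (z i0 - z jj)" .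
  have v0F: "vnorm n (g y0) \<in> F" unfolding F_def using y0T vy0 invg[OF y0T] by force
  have pos: "cmod (z i0 - z jj) > 0" using nz[OF i0(1,2)] by simp
  have le0: "1/e \<le> vnorm n (g y0)" unfolding vg0
    using pos i0(3) e by (intro divide_left_mono) auto
  have bdd: "bdd_above F" using ub by (intro bdd_aboveI) auto
  have S1: "1/e \<le> Sup F" using le0 cSup_upper[OF v0F bdd] by linarith
  have S2: "Sup F \<le> 1/d" using v0F ub by (intro cSup_least) auto
  have "mu n M (z jj) (ebasis jj) = ereal (frob n M * Sup F)"
    using bij unfolding mu_def A_def T_def F_def by simp
  then show ?thesis using S1 S2 unfolding M_def by blast
qed


lemma kk_facts:
  assumes "n \<ge> 2"
  shows "kk n \<ge> 1" "n \<le> (kk n + 1) * (kk n + 1)" "real (kk n) * real (kk n) \<le> real n"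
proof -
  define s where "s = sqrt (real n)"
  have s1: "s > 1" using assms by (simp add: s_def)
  have cs1: "s \<le> of_int \<lceil>s\<rceil>" by (rule le_of_int_ceiling)
  have cs2: "of_int \<lceil>s\<rceil> \<le> s + 1" by (rule of_int_ceiling_le_add_one)
  have "of_int \<lceil>s\<rceil> > (1::real)" using s1 cs1 by linarith
  then have c2: "\<lceil>s\<rceil> \<ge> 2" by simp
  have n1: "nat \<lceil>s\<rceil> \<ge> 1" using c2 by arith
  have "real (kk n) = real (nat \<lceil>s\<rceil>) - 1"
    unfolding kk_def s_def[symmetric] using n1 by (simp add: of_nat_diff)
  also have "real (nat \<lceil>s\<rceil>) = of_int \<lceil>s\<rceil>" using c2 by simp
  finally have kdef: "real (kk n) = of_int \<lceil>s\<rceil> - 1" .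
  have k1: "real (kk n) \<ge> 1" using kdef c2 by simp
  then show "kk n \<ge> 1" by simp
  have ss: "real n = s * s" using s_def by simp
  have "s * s \<le> (real (kk n) + 1) * (real (kk n) + 1)"
    using cs1 kdef s1 by (intro mult_mono) auto
  then have "real n \<le> real ((kk n + 1) * (kk n + 1))" unfolding ss
    by (simp only: of_nat_mult of_nat_add of_nat_1)
  then show "n \<le> (kk n + 1) * (kk n + 1)" by (simp only: of_nat_le_iff)
  have "real (kk n) * real (kk n) \<le> s * s"
    using cs2 kdef k1 by (intro mult_mono) auto
  then show "real (kk n) * real (kk n) \<le> real n" using ss by simp
qed

lemma divmod_pq:
  fixes p q k :: nat
  assumes "q \<le> k"
  shows "(p*(k+1)+q) div (k+1) = p" "(p*(k+1)+q) mod (k+1) = q"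
proof -
  have e: "p*(k+1)+q = q + (k+1)*p" by (simp add: algebra_simps)
  show "(p*(k+1)+q) div (k+1) = p" "(p*(k+1)+q) mod (k+1) = q" using assms
    unfolding e by (simp_all only: div_mult_self2 mod_mult_self2) auto
qed

lemma gp_step_q: "cmod (gp k p (q+1) - gp k p q) = 2 / real k"
proof -
  have "gp k p (q+1) - gp k p q = Complex 0 (2 / real k)"
    by (simp add: gp_def complex_eq_iff add_divide_distrib diff_divide_distrib)
  then show ?thesis by (simp add: complex_norm)
qed

lemma gp_step_p: "cmod (gp k (p+1) q - gp k p q) = 2 / real k"
proof -
  have "gp k (p+1) q - gp k p q = Complex (2 / real k) 0"
    by (simp add: gp_def complex_eq_iff add_divide_distrib diff_divide_distrib)
  then show ?thesis by (simp add: complex_norm)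
qed

lemma gp_sep:
  assumes "k \<ge> 1" "(p, q) \<noteq> (p', q')"
  shows "2 / real k \<le> cmod (gp k p q - gp k p' q')"
proof (cases "p = p'")
  case True
  then have qq: "q \<noteq> q'" using assms by auto
  have "Im (gp k p q - gp k p' q') = 2 * (real q - real q') / real k"
    using True by (simp add: gp_def diff_divide_distrib)
  moreover have "\<bar>real q - real q'\<bar> \<ge> 1" using qq by linarith
  ultimately have "\<bar>Im (gp k p q - gp k p' q')\<bar> \<ge> 2 / real k" using assms(1)
    by (simp add: abs_mult divide_right_mono)
  then show ?thesis using abs_Im_le_cmod order_trans by blast
next
  case False
  have "Re (gp k p q - gp k p' q') = 2 * (real p - real p') / real k"
    by (simp add: gp_def diff_divide_distrib)
  moreover have "\<bar>real p - real p'\<bar> \<ge> 1" using False by linarith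
  ultimately have "\<bar>Re (gp k p q - gp k p' q')\<bar> \<ge> 2 / real k" using assms(1)
    by (simp add: abs_mult divide_right_mono)
  then show ?thesis using abs_Re_le_cmod order_trans by blast
qed


lemma zz_gen:
  assumes "n \<ge> 2" "i < n"
  shows "zz n i = gp (kk n) (i div (kk n + 1)) (i mod (kk n + 1))"
  using zz_eq kk_facts[OF assms(1)] assms(2) by simp

lemma zz_pq:
  assumes "n \<ge> 2" "q \<le> kk n" "p*(kk n+1)+q < n"
  shows "zz n (p*(kk n+1)+q) = gp (kk n) p q"
  using zz_gen[OF assms(1,3)] divmod_pq[OF assms(2)] by simp

lemma zz_sep:
  assumes "n \<ge> 2" "i < n" "j < n" "i \<noteq> j"
  shows "2 / real (kk n) \<le> cmod (zz n i - zz n j)"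
proof -
  let ?k = "kk n"
  have "(i div (?k+1), i mod (?k+1)) \<noteq> (j div (?k+1), j mod (?k+1))"
    using assms(4) by (metis div_mod_decomp prod.inject)
  then show ?thesis using zz_gen[OF assms(1,2)] zz_gen[OF assms(1,3)]
      gp_sep kk_facts(1)[OF assms(1)] by simp
qed

lemma zz_nb:
  assumes n: "n \<ge> 2" and j: "j < n"
  shows "\<exists>i0<n. i0 \<noteq> j \<and> cmod (zz n i0 - zz n j) \<le> 2 / real (kk n)"
proof -
  let ?k = "kk n"
  define p where "p = j div (?k+1)"
  define q where "q = j mod (?k+1)"
  have jpq: "j = p*(?k+1)+q" unfolding p_def q_def by (rule div_mult_mod_eq[symmetric])
  have qk: "q \<le> ?k" unfolding q_def by (metis less_Suc_eq_le mod_less_divisor zero_less_Suc Suc_eq_plus1)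
  have k1: "?k \<ge> 1" using kk_facts(1)[OF n] .
  show ?thesis
  proof (cases "q \<ge> 1")
    case True
    define i0 where "i0 = p*(?k+1)+(q-1)"
    have i0n: "i0 < n" "i0 \<noteq> j" using j True unfolding i0_def jpq by auto
    have "zz n i0 = gp ?k p (q-1)" unfolding i0_def using zz_pq[OF n _ ] i0n qk
      by (simp add: i0_def)
    moreover have "zz n j = gp ?k p ((q-1)+1)" using zz_pq[OF n qk] j True jpq by simp
    ultimately have "cmod (zz n i0 - zz n j) = 2 / real ?k"
      using gp_step_q[of ?k p "q-1"] by (simp add: norm_minus_commute)
    then show ?thesis using i0n by auto
  next
    case False
    then have q0: "q = 0" by simp
    show ?thesis
    proof (cases "p \<ge> 1")
      case True
      define i0 where "i0 = (p-1)*(?k+1)+0"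
      have "i0 < j" using True unfolding i0_def jpq q0
        by (metis add.right_neutral add_diff_cancel_left' diff_less le_add1 less_le_trans
            mult_less_cancel2 zero_less_Suc Suc_eq_plus1 less_one le_less_trans not_le)
      then have i0n: "i0 < n" "i0 \<noteq> j" using j by auto
      have "zz n i0 = gp ?k (p-1) 0" using zz_pq[OF n _, of 0 "p-1"] i0n unfolding i0_def by simp
      moreover have "zz n j = gp ?k ((p-1)+1) 0" using zz_pq[OF n qk] j True jpq q0 by simp
      ultimately have "cmod (zz n i0 - zz n j) = 2 / real ?k"
        using gp_step_p[of ?k "p-1" 0] by (simp add: norm_minus_commute)
      then show ?thesis using i0n by auto
    next
      case False
      then have j0: "j = 0" using jpq q0 by simp
      have i0n: "(1::nat) < n" "(1::nat) \<noteq> j" using n j0 by auto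
      have "zz n (0*(?k+1)+(0+1)) = gp ?k 0 (0+1)" using zz_pq[OF n _, of 1 0] k1 i0n by simp
      moreover have "zz n (0*(?k+1)+0) = gp ?k 0 0" using zz_pq[OF n _, of 0 0] n by simp
      ultimately have "cmod (zz n 1 - zz n j) = 2 / real ?k"
        using gp_step_q[of ?k 0 0] j0 by simp
      then show ?thesis using i0n by auto
    qed
  qed
qed


lemma frob_D: "frob n (Dmat n) = sqrt (\<Sum>i<n. (cmod (zz n i))\<^sup>2)"
proof -
  have "(\<Sum>j<n. (cmod (Dmat n i j))\<^sup>2) = (cmod (zz n i))\<^sup>2" if "i < n" for i
  proof -
    have "(\<Sum>j<n. (cmod (Dmat n i j))\<^sup>2) = (\<Sum>j<n. if j = i then (cmod (zz n i))\<^sup>2 else 0)"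
      by (rule sum.cong) (auto simp: Dmat_def that)
    also have "\<dots> = (cmod (zz n i))\<^sup>2" using that by simp
    finally show ?thesis .
  qed
  then show ?thesis unfolding frob_def by (metis (no_types, lifting) lessThan_iff sum.cong)
qed

lemma gp_le2:
  assumes "k \<ge> 1" "p \<le> k" "q \<le> k"
  shows "(cmod (gp k p q))\<^sup>2 \<le> 2"
proof -
  have r: "\<bar>-1 + 2 * real p / real k\<bar> \<le> 1" and i: "\<bar>-1 + 2 * real q / real k\<bar> \<le> 1"
  proof -
    have "real p / real k \<le> 1" "real q / real k \<le> 1" using assms by auto
    moreover have "real p / real k \<ge> 0" "real q / real k \<ge> 0" by auto
    moreover have "2 * real p / real k = 2 * (real p / real k)" "2 * real q / real k = 2 * (real q / real k)"
      by simp_all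
    ultimately show "\<bar>-1 + 2 * real p / real k\<bar> \<le> 1" "\<bar>-1 + 2 * real q / real k\<bar> \<le> 1"
      by (simp_all only: abs_le_iff) linarith+
  qed
  have "(cmod (gp k p q))\<^sup>2 = (-1 + 2 * real p / real k)\<^sup>2 + (-1 + 2 * real q / real k)\<^sup>2"
    by (simp add: gp_def cmod_power2)
  also have "\<dots> \<le> 1 + 1" using r i by (intro add_mono) (simp_all only: abs_square_le_1)
  finally show ?thesis by simp
qed

lemma gp_ge:
  assumes "k \<ge> 1" "4 * p \<le> k"
  shows "(cmod (gp k p q))\<^sup>2 \<ge> 1/4"
proof -
  have "4 * real p \<le> real k" using assms(2) by linarith
  then have "real p / real k \<le> 1/4" using assms(1) by (simp add: pos_divide_le_eq)
  moreover have "2 * real p / real k = 2 * (real p / real k)" by simp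
  ultimately have r: "1/2 \<le> -(-1 + 2 * real p / real k)" by linarith
  have "(1/2::real)\<^sup>2 \<le> (-(-1 + 2 * real p / real k))\<^sup>2"
    by (rule power_mono[OF r]) simp
  also have "\<dots> = (-1 + 2 * real p / real k)\<^sup>2" by (simp only: power2_minus)
  also have "\<dots> \<le> (-1 + 2 * real p / real k)\<^sup>2 + (-1 + 2 * real q / real k)\<^sup>2" by simp
  also have "\<dots> = (cmod (gp k p q))\<^sup>2"
    by (simp only: gp_def cmod_power2 complex.sel)
  finally show ?thesis by (simp add: power2_eq_square)
qed

lemma frob_bounds:
  assumes n: "n \<ge> 2"
  shows "real n / 16 \<le> (\<Sum>i<n. (cmod (zz n i))\<^sup>2)" "(\<Sum>i<n. (cmod (zz n i))\<^sup>2) \<le> 2 * real n"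
proof -
  let ?k = "kk n"
  have k1: "?k \<ge> 1" using kk_facts(1)[OF n] .
  have ub: "(cmod (zz n i))\<^sup>2 \<le> 2" if "i < n" for i
  proof -
    have "i < (?k+1)*(?k+1)" using that kk_facts(2)[OF n] by linarith
    then have "i div (?k+1) < ?k+1" by (simp add: less_mult_imp_div_less)
    moreover have "i mod (?k+1) < ?k+1" by simp
    ultimately show ?thesis using zz_gen[OF n that] gp_le2[OF k1] by simp
  qed
  have "(\<Sum>i<n. (cmod (zz n i))\<^sup>2) \<le> (\<Sum>i<n. 2)" by (rule sum_mono) (use ub in auto)
  then show "(\<Sum>i<n. (cmod (zz n i))\<^sup>2) \<le> 2 * real n" by simp
  define B where "B = {i. i < n \<and> 4 * (i div (?k+1)) \<le> ?k}"
  define X where "X = (?k+1)*(?k div 4 + 1)"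
  define m where "m = min n X"
  have sub: "{..<m} \<subseteq> B"
  proof
    fix i assume "i \<in> {..<m}"
    then have i: "i < n" "i < (?k div 4 + 1)*(?k+1)" by (auto simp: m_def X_def mult.commute)
    have "i div (?k+1) < ?k div 4 + 1" using less_mult_imp_div_less[OF i(2)] .
    then have "i div (?k+1) \<le> ?k div 4" by simp
    then have "4 * (i div (?k+1)) \<le> 4 * (?k div 4)" by simp
    also have "\<dots> \<le> ?k" by simp
    finally show "i \<in> B" using i by (simp add: B_def)
  qed
  have finB: "finite B" by (simp add: B_def)
  have cardB: "m \<le> card B" using card_mono[OF finB sub] by simp
  have "?k + 1 \<le> 4 * (?k div 4 + 1)" by presburger
  then have "(?k+1)*(?k+1) \<le> (?k+1) * (4 * (?k div 4 + 1))" by (rule mult_left_mono) simp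
  then have "n \<le> 4 * ((?k+1)*(?k div 4 + 1))" using kk_facts(2)[OF n] by (simp add: algebra_simps)
  then have X4: "n \<le> 4 * X" unfolding X_def .
  have "n \<le> 4 * m"
  proof (cases "n \<le> X")
    case True then show ?thesis by (simp add: m_def)
  next
    case False then show ?thesis using X4 by (simp add: m_def)
  qed
  then have n4: "real n \<le> 4 * real (card B)" using cardB by linarith
  have "(\<Sum>i\<in>B. (1::real)/4) \<le> (\<Sum>i\<in>B. (cmod (zz n i))\<^sup>2)"
  proof (rule sum_mono)
    fix i assume "i \<in> B"
    then have i: "i < n" "4 * (i div (?k+1)) \<le> ?k" by (auto simp: B_def)
    show "1/4 \<le> (cmod (zz n i))\<^sup>2" using zz_gen[OF n i(1)] gp_ge[OF k1 i(2)] by simp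
  qed
  also have "\<dots> \<le> (\<Sum>i<n. (cmod (zz n i))\<^sup>2)"
    by (rule sum_mono2) (auto simp: B_def)
  finally show "real n / 16 \<le> (\<Sum>i<n. (cmod (zz n i))\<^sup>2)" using n4 by simp
qed


lemma mu_main:
  assumes n: "n \<ge> 2" and j: "j < n"
  shows "ereal (real n / 16) \<le> mu n (Dmat n) (zz n j) (ebasis j) \<and>
         mu n (Dmat n) (zz n j) (ebasis j) \<le> ereal (real n)"
proof -
  define rk where "rk = real (kk n)"
  have k1: "rk \<ge> 1" using kk_facts(1)[OF n] by (simp add: rk_def)
  have kn: "rk * rk \<le> real n" using kk_facts(3)[OF n] by (simp add: rk_def)
  have nk: "real n \<le> (rk+1)*(rk+1)"
  proof -
    have "real n \<le> real ((kk n + 1) * (kk n + 1))" using kk_facts(2)[OF n] by (simp only: of_nat_le_iff)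
    then show ?thesis by (simp add: rk_def algebra_simps)
  qed
  have dpos: "2 / rk > 0" using k1 by simp
  obtain i0 where i0: "i0 < n" "i0 \<noteq> j" "cmod (zz n i0 - zz n j) \<le> 2 / rk"
    using zz_nb[OF n j] by (auto simp: rk_def)
  have sep: "\<And>i. i < n \<Longrightarrow> i \<noteq> j \<Longrightarrow> 2 / rk \<le> cmod (zz n i - zz n j)"
    using zz_sep[OF n _ j] by (simp add: rk_def)
  obtain S where S: "mu n (\<lambda>i j. if i = j \<and> i < n then zz n i else 0) (zz n j) (ebasis j)
           = ereal (frob n (\<lambda>i j. if i = j \<and> i < n then zz n i else 0) * S)"
      "1/(2/rk) \<le> S" "S \<le> 1/(2/rk)"
    using mu_diag[OF j dpos dpos sep i0] by blast
  have Seq: "S = rk / 2" using S(2,3) by simp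
  define \<Sigma> where "\<Sigma> = (\<Sum>i<n. (cmod (zz n i))\<^sup>2)"
  have F: "frob n (Dmat n) = sqrt \<Sigma>" unfolding \<Sigma>_def by (rule frob_D)
  have mueq: "mu n (Dmat n) (zz n j) (ebasis j) = ereal (sqrt \<Sigma> * (rk/2))"
    using S(1) F Seq unfolding Dmat_def[symmetric] by simp
  have s1: "real n / 16 \<le> \<Sigma>" and s2: "\<Sigma> \<le> 2 * real n"
    using frob_bounds[OF n] by (simp_all add: \<Sigma>_def)
  have s0: "\<Sigma> \<ge> 0" using s1 by simp
  have sq: "(sqrt \<Sigma> * (rk/2))\<^sup>2 = \<Sigma> * (rk * rk) / 4"
    using s0 by (simp add: power_mult_distrib power2_eq_square)
  have nonneg: "sqrt \<Sigma> * (rk/2) \<ge> 0" using s0 k1 by simp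
  have up: "sqrt \<Sigma> * (rk/2) \<le> real n"
  proof (rule power2_le_imp_le)
    have "\<Sigma> * (rk * rk) \<le> (2 * real n) * real n"
      using s2 kn s0 k1 by (intro mult_mono) auto
    moreover have "0 \<le> real n * real n" by simp
    ultimately show "(sqrt \<Sigma> * (rk/2))\<^sup>2 \<le> (real n)\<^sup>2" unfolding sq unfolding power2_eq_square by linarith
  qed simp
  have lo: "real n / 16 \<le> sqrt \<Sigma> * (rk/2)"
  proof (rule power2_le_imp_le[OF _ nonneg])
    have "(rk+1)*(rk+1) \<le> (2*rk)*(2*rk)" using k1 by (intro mult_mono) auto
    then have "real n / 4 \<le> rk * rk" using nk by simp
    then have "(real n / 16) * (real n / 4) \<le> \<Sigma> * (rk * rk)"
      using s1 by (intro mult_mono) auto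
    then show "(real n / 16)\<^sup>2 \<le> (sqrt \<Sigma> * (rk/2))\<^sup>2" unfolding sq
      by (simp add: power2_eq_square)
  qed
  show ?thesis unfolding mueq using up lo by simp
qed

theorem lemma2p20:
  shows "\<exists>c C :: real. c > 0 \<and> C > 0 \<and>
    (\<forall>n\<ge>2. \<forall>j<n.
        ereal (c * real n) \<le> mu n (Dmat n) (zz n j) (ebasis j) \<and>
        mu n (Dmat n) (zz n j) (ebasis j) \<le> ereal (C * real n))"
proof (intro exI conjI allI impI)
  show "(1/16::real) > 0" "(1::real) > 0" by simp_all
  fix n j :: nat assume "n \<ge> 2" "j < n"
  then show "ereal (1/16 * real n) \<le> mu n (Dmat n) (zz n j) (ebasis j)"
    "mu n (Dmat n) (zz n j) (ebasis j) \<le> ereal (1 * real n)"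
    using mu_main by auto
qed

end
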